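(* In the isotropic setting below, let $F\in\mathrm{GL}^+(3)$ be fixed and $t\mapsto C_p(t)\in\mathrm{PSym}(3)$ be differentiable with $$\frac{d}{dt}[C_p]=\lambda(t)\,\frac{\mathrm{dev}_3\widetilde\Sigma}{\varphi}\,C_p,\qquad \lambda(t)\ge0,\quad \varphi:=\sqrt{\mathrm{tr}[(\mathrm{dev}_3\widetilde\Sigma)^2]}>0,$$ where $\widetilde\Sigma$ and $\varphi$ are evaluated at $(C,C_p(t))$. Then $\frac{d}{dt}[C_p]$ is symmetric, $\det C_p(t)$ is constant in $t$, and $$\frac{d}{dt}\widetilde W\big(CC_p^{-1}(t)\big)=-\frac{\lambda(t)}{2}\,\varphi=-\frac{\lambda(t)}{2}\,\big\|\mathrm{dev}_3\big(U_p^{-1}\widetilde\Sigma\,U_p\big)\big\|\le0,\qquad U_p=\sqrt{C_p(t)}.$$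
   Context: $W$ objective and isotropic, written $W(F_e)=\Psi(I_1(C_e),I_2(C_e),I_3(C_e))$ with $\Psi\in C^1$; $\widetilde W(X)=\Psi(\mathrm{tr}X,\mathrm{tr}(\mathrm{Cof}X),\det X)$. $C=F^TF$. $\langle X,Y\rangle=\mathrm{tr}(XY^T)$, $\|\cdot\|$ Frobenius norm, $D$ gradient, $\mathrm{dev}_3X=X-\frac13\mathrm{tr}(X)\mathbb{1}$. $\widetilde\Sigma:=2\,C\,D\widetilde W(CC_p^{-1})\,C_p^{-1}$. *)

theory Defs
  imports "HOL-Analysis.Analysis"
begin

type_synonym mat3 = "real^3^3"

text \<open>Cofactor matrix: entry (i,j) is the determinant of X with row i replaced by
  the j-th unit row, i.e. (-1)^(i+j) times the (i,j) minor.\<close>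
definition Cof :: "mat3 \<Rightarrow> mat3" where
  "Cof X = (\<chi> i j. det (\<chi> k l. if k = i then (if l = j then 1 else 0) else X $ k $ l))"

definition PSym :: "mat3 set" where
  "PSym = {P. transpose P = P \<and> (\<forall>x::real^3. x \<noteq> 0 \<longrightarrow> x \<bullet> (P *v x) > 0)}"

definition msqrt :: "mat3 \<Rightarrow> mat3" where
  "msqrt P = (THE U. U \<in> PSym \<and> U ** U = P)"

definition dev3 :: "mat3 \<Rightarrow> mat3" where
  "dev3 X = X - ((1/3) * trace X) *\<^sub>R mat 1"

definition Wt :: "(real^3 \<Rightarrow> real) \<Rightarrow> mat3 \<Rightarrow> real" where
  "Wt \<Psi> X = \<Psi> (vector [trace X, trace (Cof X), det X])"

text \<open>Gradient D f(X) w.r.t. the Frobenius inner product <X,Y> = tr(X Y^T)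
  (which is the inner product of type real^3^3).\<close>
definition Dgrad :: "(mat3 \<Rightarrow> real) \<Rightarrow> mat3 \<Rightarrow> mat3" where
  "Dgrad f X = (THE G. (f has_derivative (\<lambda>H. G \<bullet> H)) (at X))"

definition Sigt :: "(real^3 \<Rightarrow> real) \<Rightarrow> mat3 \<Rightarrow> mat3 \<Rightarrow> mat3" where
  "Sigt \<Psi> C Cp = 2 *\<^sub>R (C ** Dgrad (Wt \<Psi>) (C ** matrix_inv Cp) ** matrix_inv Cp)"

definition phi :: "(real^3 \<Rightarrow> real) \<Rightarrow> mat3 \<Rightarrow> mat3 \<Rightarrow> real" where
  "phi \<Psi> C Cp = sqrt (trace (dev3 (Sigt \<Psi> C Cp) ** dev3 (Sigt \<Psi> C Cp)))"

end

theory Submission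
  imports Defs
begin



lemma inner_trace: "(A::mat3) \<bullet> B = trace (A ** transpose B)"
  by (simp add: inner_vec_def sum_3 trace_def matrix_matrix_mult_def transpose_def)

lemma trace_transpose: "trace (transpose (A::mat3)) = trace A"
  by (simp add: trace_def transpose_def)

lemma trace_scaleR: "trace (c *\<^sub>R (A::mat3)) = c * trace A"
  by (simp add: trace_def sum_3 algebra_simps)

lemma inv_right: "invertible A \<Longrightarrow> (A::mat3) ** matrix_inv A = mat 1"
  unfolding invertible_def matrix_inv_def by (rule someI2_ex) auto

lemma inv_left: "invertible A \<Longrightarrow> matrix_inv (A::mat3) ** A = mat 1"
  unfolding invertible_def matrix_inv_def by (rule someI2_ex) auto

lemma inv_unique: "(A::mat3) ** B = mat 1 \<Longrightarrow> B ** A = mat 1 \<Longrightarrow> matrix_inv A = B"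
proof -
  assume h: "A ** B = mat 1" "B ** A = mat 1"
  hence inv: "invertible A" unfolding invertible_def by blast
  have "matrix_inv A = matrix_inv A ** (A ** B)" using h by simp
  also have "\<dots> = B" using inv_left[OF inv] by (simp add: matrix_mul_assoc)
  finally show ?thesis .
qed

lemma invertible_inv: "invertible (A::mat3) \<Longrightarrow> invertible (matrix_inv A)"
  using inv_left[of A] inv_right[of A] unfolding invertible_def by blast

lemma inv_inv: "invertible (A::mat3) \<Longrightarrow> matrix_inv (matrix_inv A) = A"
  by (rule inv_unique[OF inv_left inv_right])

lemma transpose_inv: "invertible (A::mat3) \<Longrightarrow> transpose (matrix_inv A) = matrix_inv (transpose A)"
proof -
  assume a: "invertible A"
  have "transpose A ** transpose (matrix_inv A) = mat 1"
    using inv_left[OF a] by (metis matrix_transpose_mul transpose_mat)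
  moreover have "transpose (matrix_inv A) ** transpose A = mat 1"
    using inv_right[OF a] by (metis matrix_transpose_mul transpose_mat)
  ultimately show ?thesis by (simp add: inv_unique)
qed

lemma invertible_transpose: "invertible (A::mat3) \<Longrightarrow> invertible (transpose A)"
  by (simp add: invertible_det_nz)

lemma invertible_mult: "invertible (A::mat3) \<Longrightarrow> invertible (B::mat3) \<Longrightarrow> invertible (A ** B)"
  by (metis det_mul invertible_det_nz mult_eq_0_iff)

lemma inv_mult: "invertible (A::mat3) \<Longrightarrow> invertible (B::mat3) \<Longrightarrow> matrix_inv (A ** B) = matrix_inv B ** matrix_inv A"
proof -
  assume a: "invertible A" and b: "invertible B"
  have "A ** B ** (matrix_inv B ** matrix_inv A) = A ** (B ** matrix_inv B) ** matrix_inv A"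
    by (simp add: matrix_mul_assoc)
  also have "\<dots> = mat 1" using inv_right[OF a] inv_right[OF b] by simp
  finally have 1: "A ** B ** (matrix_inv B ** matrix_inv A) = mat 1" .
  have "matrix_inv B ** matrix_inv A ** (A ** B) = matrix_inv B ** (matrix_inv A ** A) ** B"
    by (simp add: matrix_mul_assoc)
  also have "\<dots> = mat 1" using inv_left[OF a] inv_left[OF b] by simp
  finally have 2: "matrix_inv B ** matrix_inv A ** (A ** B) = mat 1" .
  show ?thesis using inv_unique[OF 1 2] .
qed

lemma det_inv: "invertible (A::mat3) \<Longrightarrow> det (matrix_inv A) = 1 / det A"
proof -
  assume a: "invertible A"
  have "det A * det (matrix_inv A) = 1" using inv_right[OF a] by (metis det_I det_mul)
  moreover have "det A \<noteq> 0" using a by (simp add: invertible_det_nz)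
  ultimately show ?thesis by (simp add: field_simps)
qed

lemma sym_inner: "transpose A = A \<Longrightarrow> x \<bullet> ((A::mat3) *v y) = (A *v x) \<bullet> y"
proof -
  assume "transpose A = A"
  hence "A *v x = x v* A" by (metis transpose_matrix_vector)
  thus ?thesis by (simp add: dot_lmul_matrix)
qed

lemma PSym_sym: "P \<in> PSym \<Longrightarrow> transpose P = P" by (simp add: PSym_def)
lemma PSym_pos: "P \<in> PSym \<Longrightarrow> x \<noteq> 0 \<Longrightarrow> x \<bullet> (P *v x) > 0" by (simp add: PSym_def)

lemma PSym_inj: "P \<in> PSym \<Longrightarrow> inj ((*v) P)"
proof -
  assume P: "P \<in> PSym"
  have "P *v x = 0 \<Longrightarrow> x = 0" for x using PSym_pos[OF P, of x] by auto
  thus ?thesis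
    by (metis (no_types, lifting) injI matrix_vector_mult_diff_distrib right_minus_eq)
qed

lemma PSym_invertible: "P \<in> PSym \<Longrightarrow> invertible P"
  by (metis PSym_inj invertible_left_inverse matrix_left_invertible_injective)

lemma PSym_inv: "P \<in> PSym \<Longrightarrow> matrix_inv P \<in> PSym"
proof -
  assume P: "P \<in> PSym"
  have iv: "invertible P" using PSym_invertible[OF P] .
  have s: "transpose (matrix_inv P) = matrix_inv P"
    using transpose_inv[OF iv] PSym_sym[OF P] by simp
  have "x \<bullet> (matrix_inv P *v x) > 0" if "x \<noteq> 0" for x
  proof -
    let ?y = "matrix_inv P *v x"
    have px: "P *v ?y = x" using inv_right[OF iv] by (simp add: matrix_vector_mul_assoc)
    hence "?y \<noteq> 0" using that by auto
    hence "?y \<bullet> (P *v ?y) > 0" using PSym_pos[OF P] by blast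
    thus ?thesis using px by (simp add: inner_commute)
  qed
  thus ?thesis using s by (simp add: PSym_def)
qed

lemma trace_quad: "trace (transpose B ** A ** (B::mat3)) = (\<Sum>j\<in>UNIV. column j B \<bullet> (A *v column j B))"
  unfolding trace_def matrix_matrix_mult_def transpose_def column_def inner_vec_def matrix_vector_mult_def
  apply (simp add: sum_distrib_left sum_distrib_right mult.assoc mult.left_commute)
  apply (rule sum.cong[OF refl])
  apply (subst sum.swap)
  apply (simp add: mult_ac)
  done

lemma trace_quad_pos: "P \<in> PSym \<Longrightarrow> invertible (B::mat3) \<Longrightarrow> trace (transpose B ** P ** B) > 0"
proof -
  assume P: "P \<in> PSym" and B: "invertible B"
  have "column j B \<noteq> 0" for j
  proof
    assume "column j B = 0"
    hence "B *v axis j 1 = 0" by (simp add: matrix_vector_mult_basis)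
    hence "axis j (1::real) = 0" using inj_matrix_vector_mult[OF B]
      by (metis injD matrix_vector_mult_0_right)
    thus False by (simp add: axis_eq_0_iff)
  qed
  hence "\<forall>j\<in>UNIV. column j B \<bullet> (P *v column j B) > 0" using PSym_pos[OF P] by blast
  thus ?thesis unfolding trace_quad by (simp add: sum_pos)
qed

lemma trace_quad_nonneg: "P \<in> PSym \<Longrightarrow> trace (transpose B ** P ** (B::mat3)) \<ge> 0"
proof -
  assume P: "P \<in> PSym"
  have "column j B \<bullet> (P *v column j B) \<ge> 0" for j
    using PSym_pos[OF P, of "column j B"] by (cases "column j B = 0") auto
  thus ?thesis unfolding trace_quad by (simp add: sum_nonneg)
qed

lemma trace_quad_zero: "P \<in> PSym \<Longrightarrow> trace (transpose B ** P ** (B::mat3)) = 0 \<Longrightarrow> B = 0"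
proof -
  assume P: "P \<in> PSym" and z: "trace (transpose B ** P ** (B::mat3)) = 0"
  have nn: "\<forall>j\<in>UNIV. column j B \<bullet> (P *v column j B) \<ge> 0"
    using PSym_pos[OF P] by (metis inner_zero_left less_eq_real_def)
  have "\<forall>j\<in>UNIV. column j B \<bullet> (P *v column j B) = 0"
    using z unfolding trace_quad by (subst (asm) sum_nonneg_eq_0_iff) (use nn in auto)
  hence "column j B = 0" for j using PSym_pos[OF P, of "column j B"] by force
  thus "B = 0" by (simp add: vec_eq_iff column_def)
qed




lemma mm_diff_l: "(A::mat3) ** (B - C) = A ** B - A ** C"
  by (simp add: vec_eq_iff matrix_matrix_mult_def sum_3 algebra_simps)
lemma mm_diff_r: "((A::mat3) - B) ** C = A ** C - B ** C"
  by (simp add: vec_eq_iff matrix_matrix_mult_def sum_3 algebra_simps)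
lemma mm_add_r: "((A::mat3) + B) ** C = A ** C + B ** C"
  by (simp add: vec_eq_iff matrix_matrix_mult_def sum_3 algebra_simps)
lemma mm_add_l: "(A::mat3) ** (B + C) = A ** B + A ** C"
  by (simp add: vec_eq_iff matrix_matrix_mult_def sum_3 algebra_simps)
lemma mm_scaleR_l: "(c *\<^sub>R (A::mat3)) ** B = c *\<^sub>R (A ** B)"
  by (simp add: vec_eq_iff matrix_matrix_mult_def sum_3 algebra_simps)
lemma mm_scaleR_r: "(A::mat3) ** (c *\<^sub>R B) = c *\<^sub>R (A ** B)"
  by (simp add: vec_eq_iff matrix_matrix_mult_def sum_3 algebra_simps)
lemma mm_neg_l: "(- (A::mat3)) ** B = - (A ** B)"
  by (simp add: vec_eq_iff matrix_matrix_mult_def sum_3 algebra_simps)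
lemma mm_neg_r: "(A::mat3) ** (- B) = - (A ** B)"
  by (simp add: vec_eq_iff matrix_matrix_mult_def sum_3 algebra_simps)
lemma tr_add: "transpose ((A::mat3) + B) = transpose A + transpose B"
  by (simp add: vec_eq_iff transpose_def)
lemma tr_diff: "transpose ((A::mat3) - B) = transpose A - transpose B"
  by (simp add: vec_eq_iff transpose_def)
lemma tr_scaleR: "transpose (c *\<^sub>R (A::mat3)) = c *\<^sub>R transpose A"
  by (simp add: vec_eq_iff transpose_def)
lemma tr_neg: "transpose (- (A::mat3)) = - transpose A"
  by (simp add: vec_eq_iff transpose_def)
lemma trace_neg: "trace (- (A::mat3)) = - trace A"
  by (simp add: trace_def sum_3)

lemma quad_zero:
  fixes a b :: real
  assumes h: "\<forall>t. a*t + b*t^2 \<le> 0"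
  shows "a = 0"
proof -
  define e where "e = 1/(2*(\<bar>b\<bar>+1))"
  have e: "e > 0" by (simp add: e_def)
  have be: "\<bar>b*e\<bar> < 1" unfolding e_def by (simp add: abs_mult field_simps)
  have "a*(a*e) + b*(a*e)^2 \<le> 0" using h by blast
  hence "a^2 * e * (1 + b*e) \<le> 0" by (simp add: power2_eq_square algebra_simps)
  moreover have "1 + b*e > 0" using be by linarith
  ultimately have "a^2 \<le> 0" using e
    by (metis mult_pos_pos not_le zero_less_power2 mult_le_0_iff less_le mult_zero_left)
  thus ?thesis by simp
qed

lemma eig_exists:
  fixes S :: mat3 and V :: "(real^3) set"
  assumes sym: "transpose S = S" and sub: "subspace V" and inv: "\<forall>v\<in>V. S *v v \<in> V"
    and vV: "v \<in> V" and v0: "v \<noteq> 0"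
  shows "\<exists>x\<in>V. norm x = 1 \<and> S *v x = (x \<bullet> (S *v x)) *\<^sub>R x"
proof -
  let ?K = "sphere 0 1 \<inter> V"
  let ?q = "\<lambda>x. x \<bullet> (S *v x)"
  have cK: "compact ?K" by (simp add: closed_subspace compact_Int_closed sub)
  have "v /\<^sub>R norm v \<in> ?K" using vV v0 sub by (simp add: subspace_scale)
  hence neK: "?K \<noteq> {}" by blast
  have bl: "bounded_linear (\<lambda>x. S *v x)"
    using matrix_vector_mul_linear linear_conv_bounded_linear by blast
  have cq: "continuous_on ?K ?q"
    by (intro continuous_intros linear_continuous_on bl)
  obtain x0 where x0K: "x0 \<in> ?K" and x0m: "\<forall>y\<in>?K. ?q y \<le> ?q x0"
    using continuous_attains_sup[OF cK neK cq] by blast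
  define \<mu> where "\<mu> = ?q x0"
  have x0V: "x0 \<in> V" and nx0: "norm x0 = 1" using x0K by auto
  have x0x0: "x0 \<bullet> x0 = 1" using nx0 by (simp add: dot_square_norm)
  have bound: "?q z \<le> \<mu> * (z \<bullet> z)" if zV: "z \<in> V" for z
  proof (cases "z = 0")
    case True thus ?thesis by simp
  next
    case False
    let ?w = "z /\<^sub>R norm z"
    have "?w \<in> ?K" using zV False sub by (simp add: subspace_scale)
    hence "?q ?w \<le> \<mu>" using x0m \<mu>_def by blast
    moreover have "?q ?w = ?q z / (norm z)^2"
      by (simp add: matrix_vector_mult_scaleR power2_eq_square field_simps)
    moreover have "z \<bullet> z = (norm z)^2" by (simp add: power2_norm_eq_inner)
    moreover have "(norm z)^2 > 0" using False by simp
    ultimately show ?thesis by (simp add: field_simps)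
  qed
  have orth: "y \<bullet> (S *v x0 - \<mu> *\<^sub>R x0) = 0" if yV: "y \<in> V" for y
  proof -
    have "(2*(y \<bullet> (S *v x0) - \<mu>*(y \<bullet> x0)))*t + (?q y - \<mu>*(y \<bullet> y))*t^2 \<le> 0" for t
    proof -
      have "x0 + t *\<^sub>R y \<in> V" using sub x0V yV by (simp add: subspace_add subspace_scale)
      hence b: "?q (x0 + t *\<^sub>R y) \<le> \<mu> * ((x0 + t *\<^sub>R y) \<bullet> (x0 + t *\<^sub>R y))" by (rule bound)
      have s: "x0 \<bullet> (S *v y) = y \<bullet> (S *v x0)"
        using sym_inner[OF sym, of x0 y] by (simp add: inner_commute)
      have e1: "?q (x0 + t *\<^sub>R y) = \<mu> + 2*t*(y \<bullet> (S *v x0)) + t^2 * ?q y"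
        unfolding \<mu>_def
        by (simp add: matrix_vector_right_distrib matrix_vector_mult_scaleR inner_add_left
            inner_add_right s power2_eq_square algebra_simps)
      have e2: "(x0 + t *\<^sub>R y) \<bullet> (x0 + t *\<^sub>R y) = 1 + 2*t*(y \<bullet> x0) + t^2*(y \<bullet> y)"
        using x0x0 by (simp add: inner_add_left inner_add_right inner_commute power2_eq_square algebra_simps)
      have b': "\<mu> + 2*t*(y \<bullet> (S *v x0)) + t^2 * ?q y \<le> \<mu> * (1 + 2*t*(y \<bullet> x0) + t^2*(y \<bullet> y))"
        using b unfolding e1 e2 .
      thus ?thesis by (simp add: algebra_simps)
    qed
    hence "2*(y \<bullet> (S *v x0) - \<mu>*(y \<bullet> x0)) = 0" by (intro quad_zero) blast
    thus ?thesis by (simp add: inner_diff_right)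
  qed
  have "S *v x0 - \<mu> *\<^sub>R x0 \<in> V" using sub inv x0V by (simp add: subspace_diff subspace_scale)
  hence "S *v x0 - \<mu> *\<^sub>R x0 = 0" using orth by (metis inner_eq_zero_iff)
  hence "S *v x0 = \<mu> *\<^sub>R x0" by simp
  thus ?thesis using x0V nx0 \<mu>_def by blast
qed




definition outer :: "real^3 \<Rightarrow> real^3 \<Rightarrow> mat3" where
  "outer a b = (\<chi> i j. a$i * b$j)"

lemma outer_mv: "outer a b *v x = (b \<bullet> x) *\<^sub>R a"
  by (simp add: vec_eq_iff outer_def matrix_vector_mult_def inner_vec_def sum_distrib_left mult_ac)

lemma mv_scaleR: "(c *\<^sub>R (A::mat3)) *v x = c *\<^sub>R (A *v x)"
  by (simp add: vec_eq_iff matrix_vector_mult_def sum_3 algebra_simps)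

lemma outer_sym: "transpose (outer a a) = outer a a"
  by (simp add: vec_eq_iff outer_def transpose_def mult.commute)

lemma eig_inv_orth:
  assumes sym: "transpose S = S" and e: "S *v e = m *\<^sub>R e" and o: "orthogonal e y"
  shows "orthogonal e ((S::mat3) *v y)"
proof -
  have "e \<bullet> (S *v y) = (S *v e) \<bullet> y" by (rule sym_inner[OF sym])
  also have "\<dots> = m * (e \<bullet> y)" using e by simp
  finally show ?thesis using o by (simp add: orthogonal_def)
qed

lemma sqrt_exists:
  assumes P: "P \<in> PSym"
  shows "\<exists>U\<in>PSym. U ** U = P"
proof -
  have sym: "transpose P = P" using P by (simp add: PSym_def)
  obtain e1 where e1: "norm e1 = 1" "P *v e1 = (e1 \<bullet> (P *v e1)) *\<^sub>R e1"
    using eig_exists[OF sym subspace_UNIV, of "axis 1 1"] by (auto simp: axis_eq_0_iff)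
  define m1 where "m1 = e1 \<bullet> (P *v e1)"
  have e1': "P *v e1 = m1 *\<^sub>R e1" using e1 m1_def by simp
  have "dim {e1} < DIM(real^3)"
    using dim_le_card[of "{e1}" "{e1}"] by (simp add: span_base subsetI)
  then obtain v2 where v2: "v2 \<noteq> 0" "\<And>y. y \<in> span {e1} \<Longrightarrow> orthogonal v2 y"
    using orthogonal_to_subspace_exists by blast
  have "orthogonal e1 v2" using v2(2)[of e1] by (simp add: span_base orthogonal_commute)
  then obtain e2 where e2: "orthogonal e1 e2" "norm e2 = 1" "P *v e2 = (e2 \<bullet> (P *v e2)) *\<^sub>R e2"
    using eig_exists[OF sym subspace_orthogonal_to_vector[of e1], of v2] v2(1)
      eig_inv_orth[OF sym e1'] by auto
  define m2 where "m2 = e2 \<bullet> (P *v e2)"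
  have e2': "P *v e2 = m2 *\<^sub>R e2" using e2 m2_def by simp
  have "dim {e1, e2} < DIM(real^3)"
    using dim_le_card[of "{e1,e2}" "{e1,e2}"] by (simp add: span_base subsetI card_insert_if split: if_splits)
  then obtain v3 where v3: "v3 \<noteq> 0" "\<And>y. y \<in> span {e1,e2} \<Longrightarrow> orthogonal v3 y"
    using orthogonal_to_subspace_exists by blast
  have v3o: "orthogonal e1 v3" "orthogonal e2 v3"
    using v3(2)[of e1] v3(2)[of e2] by (simp_all add: span_base orthogonal_commute)
  let ?V3 = "{y. orthogonal e1 y} \<inter> {y. orthogonal e2 y}"
  have sub3: "subspace ?V3"
    by (intro subspace_inter subspace_orthogonal_to_vector)
  obtain e3 where e3: "orthogonal e1 e3" "orthogonal e2 e3" "norm e3 = 1"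
      "P *v e3 = (e3 \<bullet> (P *v e3)) *\<^sub>R e3"
    using eig_exists[OF sym sub3, of v3] v3(1) v3o
      eig_inv_orth[OF sym e1'] eig_inv_orth[OF sym e2'] by auto
  define m3 where "m3 = e3 \<bullet> (P *v e3)"
  have e3': "P *v e3 = m3 *\<^sub>R e3" using e3 m3_def by simp
  have n1: "e1 \<bullet> e1 = 1" using e1 by (simp add: dot_square_norm)
  have n2: "e2 \<bullet> e2 = 1" using e2 by (simp add: dot_square_norm)
  have n3: "e3 \<bullet> e3 = 1" using e3 by (simp add: dot_square_norm)
  have o12: "e1 \<bullet> e2 = 0" "e2 \<bullet> e1 = 0" using e2 by (auto simp: orthogonal_def inner_commute)
  have o13: "e1 \<bullet> e3 = 0" "e3 \<bullet> e1 = 0" using e3 by (auto simp: orthogonal_def inner_commute)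
  have o23: "e2 \<bullet> e3 = 0" "e3 \<bullet> e2 = 0" using e3 by (auto simp: orthogonal_def inner_commute)
  have nz: "e1 \<noteq> 0" "e2 \<noteq> 0" "e3 \<noteq> 0" using e1 e2 e3 by auto
  have m1p: "m1 > 0" unfolding m1_def using PSym_pos[OF P nz(1)] .
  have m2p: "m2 > 0" unfolding m2_def using PSym_pos[OF P nz(2)] .
  have m3p: "m3 > 0" unfolding m3_def using PSym_pos[OF P nz(3)] .
  let ?B = "{e1, e2, e3}"
  have d: "e1 \<noteq> e2" "e1 \<noteq> e3" "e2 \<noteq> e3" using n1 n2 o12 o13 o23 by auto
  have indep: "independent ?B"
    apply (rule pairwise_orthogonal_independent)
    using o12 o13 o23 nz by (auto simp: pairwise_def orthogonal_def)
  have cardB: "card ?B = 3" using d by simp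
  have spanB: "span ?B = UNIV"
    using card_ge_dim_independent[of ?B UNIV] indep cardB
    by auto
  define U where "U = sqrt m1 *\<^sub>R outer e1 e1 + sqrt m2 *\<^sub>R outer e2 e2 + sqrt m3 *\<^sub>R outer e3 e3"
  have Umv: "U *v x = (sqrt m1 * (e1 \<bullet> x)) *\<^sub>R e1 + (sqrt m2 * (e2 \<bullet> x)) *\<^sub>R e2
      + (sqrt m3 * (e3 \<bullet> x)) *\<^sub>R e3" for x
    unfolding U_def by (simp add: matrix_vector_mult_add_rdistrib mv_scaleR outer_mv)
  have U1: "U *v e1 = sqrt m1 *\<^sub>R e1" using n1 o12 o13 by (simp add: Umv)
  have U2: "U *v e2 = sqrt m2 *\<^sub>R e2" using n2 o12 o23 by (simp add: Umv)
  have U3: "U *v e3 = sqrt m3 *\<^sub>R e3" using n3 o13 o23 by (simp add: Umv)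
  have UUb: "\<forall>b\<in>?B. (U ** U) *v b = P *v b"
    using U1 U2 U3 e1' e2' e3' m1p m2p m3p
    by (auto simp: matrix_vector_mul_assoc[symmetric] matrix_vector_mult_scaleR)
  have UU: "U ** U = P"
  proof -
    have "(U ** U) *v x = P *v x" for x
      using linear_eq_on_span[OF matrix_vector_mul_linear matrix_vector_mul_linear, of ?B]
        UUb spanB by blast
    thus ?thesis by (simp add: matrix_eq)
  qed
  have Usym: "transpose U = U" unfolding U_def by (simp add: tr_add tr_scaleR outer_sym)
  have Upos: "x \<bullet> (U *v x) > 0" if x0: "x \<noteq> 0" for x
  proof -
    have eq: "x \<bullet> (U *v x) = sqrt m1 * (e1 \<bullet> x)^2 + sqrt m2 * (e2 \<bullet> x)^2 + sqrt m3 * (e3 \<bullet> x)^2"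
      by (simp add: Umv inner_add_right power2_eq_square inner_commute)
    have ge: "x \<bullet> (U *v x) \<ge> 0" unfolding eq using m1p m2p m3p by simp
    show ?thesis
    proof (rule ccontr)
      assume "\<not> ?thesis"
      hence "x \<bullet> (U *v x) = 0" using ge by simp
      hence "e1 \<bullet> x = 0 \<and> e2 \<bullet> x = 0 \<and> e3 \<bullet> x = 0" unfolding eq using m1p m2p m3p
        by (smt (verit, best) real_sqrt_gt_zero zero_le_power2 mult_pos_pos power2_less_eq_zero_iff
            zero_less_power2 mult_nonneg_nonneg)
      hence "U *v x = 0" by (simp add: Umv)
      hence "P *v x = 0" using UU by (metis matrix_vector_mul_assoc matrix_vector_mult_0_right)
      thus False using PSym_pos[OF P x0] by simp
    qed
  qed
  have "U \<in> PSym" using Usym Upos by (simp add: PSym_def)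
  thus ?thesis using UU by blast
qed

lemma sqrt_unique:
  assumes U: "U \<in> PSym" and V: "V \<in> PSym" and e: "U ** U = V ** V"
  shows "U = V"
proof -
  define D where "D = U - V"
  have Ds: "transpose D = D" using U V by (simp add: D_def tr_diff PSym_def)
  have "U ** D + D ** V = U ** U - V ** V"
    unfolding D_def by (simp add: mm_diff_l mm_diff_r)
  hence z: "U ** D + D ** V = 0" using e by simp
  have "trace (D ** U ** D) + trace (D ** V ** D) = trace (D ** (U ** D + D ** V))"
  proof -
    have "trace (D ** V ** D) = trace (D ** (D ** V))"
      by (metis matrix_mul_assoc trace_mul_sym)
    thus ?thesis by (simp add: mm_add_l trace_add matrix_mul_assoc)
  qed
  hence sum0: "trace (transpose D ** U ** D) + trace (transpose D ** V ** D) = 0"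
    using z Ds by (simp add: trace_def)
  have "trace (transpose D ** U ** D) \<ge> 0" "trace (transpose D ** V ** D) \<ge> 0"
    using trace_quad_nonneg[OF U] trace_quad_nonneg[OF V] by auto
  hence "trace (transpose D ** U ** D) = 0" using sum0 by linarith
  hence "D = 0" by (rule trace_quad_zero[OF U])
  thus ?thesis by (simp add: D_def)
qed

lemma msqrt: assumes P: "P \<in> PSym" shows "msqrt P \<in> PSym \<and> msqrt P ** msqrt P = P"
proof -
  have "\<exists>!U. U \<in> PSym \<and> U ** U = P"
    using sqrt_exists[OF P] sqrt_unique by (metis)
  thus ?thesis unfolding msqrt_def by (rule theI')
qed

lemma det_PSym_pos: assumes P: "P \<in> PSym" shows "det P > 0"
proof -
  obtain U where U: "U \<in> PSym" "U ** U = P" using sqrt_exists[OF P] by blast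
  have "det U \<noteq> 0" using PSym_invertible[OF U(1)] by (simp add: invertible_det_nz)
  moreover have "det P = det U * det U" using U(2) by (metis det_mul)
  ultimately show ?thesis by (metis not_real_square_gt_zero)
qed




lemma Cof_transpose_mul: "Cof X ** transpose X = det X *\<^sub>R mat 1"
  unfolding vec_eq_iff
  by (auto simp: forall_3 matrix_matrix_mult_def sum_3 Cof_def det_3 transpose_def mat_def algebra_simps)

lemma adj_formula: "transpose (Cof X) = X ** X - trace X *\<^sub>R X + trace (Cof X) *\<^sub>R mat 1"
  unfolding vec_eq_iff
  by (auto simp: forall_3 matrix_matrix_mult_def sum_3 Cof_def det_3 transpose_def mat_def trace_def algebra_simps)

lemma Cof_inv: assumes "invertible X" shows "Cof X = det X *\<^sub>R transpose (matrix_inv X)"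
proof -
  have "Cof X = Cof X ** (transpose X ** transpose (matrix_inv X))"
    using inv_left[OF assms] by (metis matrix_mul_rid matrix_transpose_mul transpose_mat)
  also have "\<dots> = det X *\<^sub>R transpose (matrix_inv X)"
    by (simp add: matrix_mul_assoc Cof_transpose_mul mm_scaleR_l)
  finally show ?thesis .
qed

lemma inv_formula: assumes "invertible X"
  shows "matrix_inv X = (1 / det X) *\<^sub>R (X ** X - trace X *\<^sub>R X + trace (Cof X) *\<^sub>R mat 1)"
proof -
  have d: "det X \<noteq> 0" using assms by (simp add: invertible_det_nz)
  have "transpose (Cof X) = det X *\<^sub>R matrix_inv X" using Cof_inv[OF assms] by (simp add: tr_scaleR)
  thus ?thesis using d by (simp add: adj_formula[symmetric])
qed

lemma entry_deriv[derivative_intros]: "((\<lambda>A::mat3. A$i$j) has_derivative (\<lambda>H. H$i$j)) F"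
proof -
  have "bounded_linear (\<lambda>A::mat3. A$i$j)"
    using bounded_linear_compose[OF bounded_linear_vec_nth[of j] bounded_linear_vec_nth[of i]] by simp
  thus ?thesis by (rule bounded_linear_imp_has_derivative)
qed

lemma det_fun3: "det = (\<lambda>A::mat3.
    A$1$1 * A$2$2 * A$3$3 + A$1$2 * A$2$3 * A$3$1 + A$1$3 * A$2$1 * A$3$2 -
    A$1$1 * A$2$3 * A$3$2 - A$1$2 * A$2$1 * A$3$3 - A$1$3 * A$2$2 * A$3$1)"
  by (rule ext) (rule det_3)

lemma det_has_derivative: "(det has_derivative (\<lambda>H. Cof X \<bullet> H)) (at X within S)"
  unfolding det_fun3
  apply (rule derivative_eq_intros entry_deriv refl)+
  apply (rule ext)
  apply (simp add: inner_vec_def sum_3 Cof_def det_3 algebra_simps)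
  done

lemma trace_fun3: "trace = (\<lambda>A::mat3. A$1$1 + A$2$2 + A$3$3)"
  by (rule ext) (simp add: trace_def sum_3)

lemma trace_has_derivative: "(trace has_derivative (\<lambda>H. mat 1 \<bullet> H)) (at (X::mat3) within S)"
  unfolding trace_fun3
  apply (rule derivative_eq_intros entry_deriv refl)+
  apply (rule ext)
  apply (simp add: inner_vec_def sum_3 mat_def)
  done

definition G2 :: "mat3 \<Rightarrow> mat3" where "G2 X = trace X *\<^sub>R mat 1 - transpose X"

lemma tc_fun3: "(\<lambda>X. trace (Cof X)) = (\<lambda>A::mat3.
    A$1$1 * A$2$2 - A$1$2 * A$2$1 + A$1$1 * A$3$3 - A$1$3 * A$3$1 + A$2$2 * A$3$3 - A$2$3 * A$3$2)"
  by (rule ext) (simp add: trace_def sum_3 Cof_def det_3 algebra_simps)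

lemma tc_has_derivative: "((\<lambda>X. trace (Cof X)) has_derivative (\<lambda>H. G2 X \<bullet> H)) (at (X::mat3) within S)"
  unfolding tc_fun3
  apply (rule derivative_eq_intros entry_deriv refl)+
  apply (rule ext)
  apply (simp add: inner_vec_def sum_3 mat_def G2_def trace_def transpose_def algebra_simps)
  done

definition gv :: "mat3 \<Rightarrow> real^3" where "gv X = vector [trace X, trace (Cof X), det X]"

lemma gv_alt: "gv = (\<lambda>X. trace X *\<^sub>R axis 1 1 + trace (Cof X) *\<^sub>R axis 2 1 + det X *\<^sub>R axis 3 1)"
  by (rule ext) (simp add: gv_def vec_eq_iff forall_3 axis_def)

lemma gv_has_derivative: "(gv has_derivative (\<lambda>H. (mat 1 \<bullet> H) *\<^sub>R axis 1 1 + (G2 X \<bullet> H) *\<^sub>R axis 2 1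
   + (Cof X \<bullet> H) *\<^sub>R axis 3 1)) (at X)"
  unfolding gv_alt
  by (rule derivative_eq_intros trace_has_derivative tc_has_derivative det_has_derivative refl)+

definition Gr :: "(real^3 \<Rightarrow> real^3) \<Rightarrow> mat3 \<Rightarrow> mat3" where
  "Gr d\<Psi> X = (d\<Psi> (gv X))$1 *\<^sub>R mat 1 + (d\<Psi> (gv X))$2 *\<^sub>R G2 X + (d\<Psi> (gv X))$3 *\<^sub>R Cof X"

lemma Wt_has_derivative:
  assumes psi: "\<forall>x. (\<forall>i. x $ i > 0) \<longrightarrow> (\<Psi> has_derivative (\<lambda>h. d\<Psi> x \<bullet> h)) (at x)"
    and pos: "trace X > 0" "trace (Cof X) > 0" "det X > 0"
  shows "(Wt \<Psi> has_derivative (\<lambda>H. Gr d\<Psi> X \<bullet> H)) (at X)"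
proof -
  have "\<forall>i. gv X $ i > 0" using pos by (simp add: gv_def forall_3)
  hence p: "(\<Psi> has_derivative (\<lambda>h. d\<Psi> (gv X) \<bullet> h)) (at (gv X))" using psi by blast
  have "Wt \<Psi> = \<Psi> \<circ> gv" by (rule ext) (simp add: Wt_def gv_def)
  moreover have "((\<Psi> \<circ> gv) has_derivative ((\<lambda>h. d\<Psi> (gv X) \<bullet> h) \<circ> (\<lambda>H. (mat 1 \<bullet> H) *\<^sub>R axis 1 1 + (G2 X \<bullet> H) *\<^sub>R axis 2 1
   + (Cof X \<bullet> H) *\<^sub>R axis 3 1))) (at X)"
    by (rule diff_chain_at[OF gv_has_derivative p])
  moreover have "((\<lambda>h. d\<Psi> (gv X) \<bullet> h) \<circ> (\<lambda>H. (mat 1 \<bullet> H) *\<^sub>R axis 1 1 + (G2 X \<bullet> H) *\<^sub>R axis 2 1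
   + (Cof X \<bullet> H) *\<^sub>R axis 3 1)) = (\<lambda>H. Gr d\<Psi> X \<bullet> H)"
    by (rule ext) (simp add: Gr_def inner_add_right inner_add_left inner_axis algebra_simps)
  ultimately show ?thesis by simp
qed

lemma Dgrad_eq:
  assumes "(f has_derivative (\<lambda>H. G \<bullet> H)) (at (X::mat3))"
  shows "Dgrad f X = G"
  unfolding Dgrad_def
proof (rule the_equality)
  show "(f has_derivative (\<lambda>H. G \<bullet> H)) (at X)" by fact
next
  fix G' assume "(f has_derivative (\<lambda>H. G' \<bullet> H)) (at X)"
  hence e: "(\<lambda>H. G' \<bullet> H) = (\<lambda>H. G \<bullet> H)" using has_derivative_unique assms by blast
  have "(G' - G) \<bullet> (G' - G) = 0" using fun_cong[OF e, of "G' - G"] by (simp add: inner_diff_left)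
  thus "G' = G" by simp
qed

lemma bb_mm: "bounded_bilinear (\<lambda>(A::mat3) (B::mat3). A ** B)"
proof -
  have "bilinear (\<lambda>(A::mat3) (B::mat3). A ** B)"
    unfolding bilinear_def linear_iff
    by (simp add: mm_add_l mm_add_r mm_scaleR_l mm_scaleR_r)
  thus ?thesis using bilinear_conv_bounded_bilinear by blast
qed

lemma mm_vd:
  "(f has_vector_derivative f') (at x within s) \<Longrightarrow> (g has_vector_derivative g') (at x within s) \<Longrightarrow>
    ((\<lambda>x. (f x::mat3) ** (g x::mat3)) has_vector_derivative (f x ** g' + f' ** g x)) (at x within s)"
  by (rule bounded_bilinear.has_vector_derivative[OF bb_mm])

lemma det_vd:
  "(f has_vector_derivative f') (at x within s) \<Longrightarrow>
    ((\<lambda>x. det (f x::mat3)) has_field_derivative (Cof (f x) \<bullet> f')) (at x within s)"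
  unfolding has_vector_derivative_def has_field_derivative_def
  apply (drule diff_chain_within[OF _ det_has_derivative])
  apply (simp add: o_def)
  apply (erule has_derivative_eq_rhs)
  apply (rule ext) apply (simp add: mult.commute)
  done

lemma trace_vd:
  "(f has_vector_derivative f') (at x within s) \<Longrightarrow>
    ((\<lambda>x. trace (f x::mat3)) has_field_derivative (mat 1 \<bullet> f')) (at x within s)"
  unfolding has_vector_derivative_def has_field_derivative_def
  apply (drule diff_chain_within[OF _ trace_has_derivative])
  apply (simp add: o_def)
  apply (erule has_derivative_eq_rhs)
  apply (rule ext) apply (simp add: mult.commute)
  done

lemma tc_vd:
  "(f has_vector_derivative f') (at x within s) \<Longrightarrow>
    ((\<lambda>x. trace (Cof (f x::mat3))) has_field_derivative (G2 (f x) \<bullet> f')) (at x within s)"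
  unfolding has_vector_derivative_def has_field_derivative_def
  apply (drule diff_chain_within[OF _ tc_has_derivative])
  apply (simp add: o_def)
  apply (erule has_derivative_eq_rhs)
  apply (rule ext) apply (simp add: mult.commute)
  done

lemma inv_vd:
  fixes Cp :: "real \<Rightarrow> mat3"
  assumes d: "\<forall>s\<in>T. invertible (Cp s)" and t: "t \<in> T"
    and c: "(Cp has_vector_derivative Cp') (at t within T)"
  shows "((\<lambda>s. matrix_inv (Cp s)) has_vector_derivative
      (- (matrix_inv (Cp t) ** Cp' ** matrix_inv (Cp t)))) (at t within T)"
proof -
  let ?f = "\<lambda>s. matrix_inv (Cp s)"
  let ?F = "\<lambda>s. inverse (det (Cp s)) *\<^sub>R (Cp s ** Cp s - trace (Cp s) *\<^sub>R Cp s + trace (Cof (Cp s)) *\<^sub>R mat 1)"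
  have dt: "det (Cp t) \<noteq> 0" using d t by (simp add: invertible_det_nz)
  obtain D where D: "(?F has_vector_derivative D) (at t within T)"
    apply (rule that)
    apply (rule has_vector_derivative_scaleR)
     apply (rule DERIV_inverse_fun[OF det_vd[OF c] dt])
    apply (rule has_vector_derivative_add)
     apply (rule has_vector_derivative_diff)
      apply (rule mm_vd[OF c c])
     apply (rule has_vector_derivative_scaleR[OF trace_vd[OF c] c])
    apply (rule has_vector_derivative_scaleR[OF tc_vd[OF c] has_vector_derivative_const])
    done
  have fD: "(?f has_vector_derivative D) (at t within T)"
    apply (rule has_vector_derivative_transform[OF t _ D])
    using d inv_formula by (simp add: divide_inverse)
  let ?g = "\<lambda>s. - (?f s ** ((Cp s - Cp t) ** ?f t))"
  have gd: "(?g has_vector_derivative (- (?f t ** (Cp' ** ?f t)))) (at t within T)"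
  proof -
    have "((\<lambda>s. (Cp s - Cp t) ** ?f t) has_vector_derivative (Cp' ** ?f t)) (at t within T)"
      using mm_vd[OF has_vector_derivative_diff[OF c has_vector_derivative_const] has_vector_derivative_const]
      by simp
    from has_vector_derivative_minus[OF mm_vd[OF fD this]] show ?thesis by simp
  qed
  have eq: "?f s - ?f t = ?g s" if "s \<in> T" for s
  proof -
    have iS: "invertible (Cp s)" and iT: "invertible (Cp t)" using d that t by auto
    have "?f s ** ((Cp s - Cp t) ** ?f t) = ?f s ** Cp s ** ?f t - ?f s ** (Cp t ** ?f t)"
      by (simp add: mm_diff_l mm_diff_r matrix_mul_assoc)
    also have "\<dots> = ?f t - ?f s" using inv_left[OF iS] inv_right[OF iT] by simp
    finally show ?thesis by simp
  qed
  have "((\<lambda>s. ?f s - ?f t) has_vector_derivative (- (?f t ** (Cp' ** ?f t)))) (at t within T)"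
    by (rule has_vector_derivative_transform[OF t _ gd]) (use eq in auto)
  from has_vector_derivative_add[OF this has_vector_derivative_const[of "?f t"]]
  show ?thesis by (simp add: matrix_mul_assoc)
qed




lemma trace_mat1: "trace (mat 1 :: mat3) = 3" by (simp add: trace_I)

lemma trace_dev3: "trace (dev3 (X::mat3)) = 0"
  by (simp add: dev3_def trace_sub trace_scaleR trace_mat1)

lemma cancel_r: "(A::mat3) ** B = mat 1 \<Longrightarrow> X ** A ** B = X"
  by (metis matrix_mul_assoc matrix_mul_rid)

lemma core_alg:
  fixes C P G P' :: mat3 and lam :: real
  assumes P: "P \<in> PSym" and Csym: "transpose C = C" and Ksym: "transpose (C ** G) = C ** G"
    and \<phi>pos: "sqrt (trace (dev3 (2 *\<^sub>R (C ** G ** matrix_inv P)) ** dev3 (2 *\<^sub>R (C ** G ** matrix_inv P)))) > 0"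
    and P': "P' = (lam / sqrt (trace (dev3 (2 *\<^sub>R (C ** G ** matrix_inv P)) ** dev3 (2 *\<^sub>R (C ** G ** matrix_inv P)))))
               *\<^sub>R (dev3 (2 *\<^sub>R (C ** G ** matrix_inv P)) ** P)"
  shows "transpose P' = P'"
    and "Cof P \<bullet> P' = 0"
    and "G \<bullet> (C ** (- (matrix_inv P ** P' ** matrix_inv P)))
          = - lam / 2 * sqrt (trace (dev3 (2 *\<^sub>R (C ** G ** matrix_inv P)) ** dev3 (2 *\<^sub>R (C ** G ** matrix_inv P))))"
    and "sqrt (trace (dev3 (2 *\<^sub>R (C ** G ** matrix_inv P)) ** dev3 (2 *\<^sub>R (C ** G ** matrix_inv P))))
          = norm (dev3 (matrix_inv (msqrt P) ** (2 *\<^sub>R (C ** G ** matrix_inv P)) ** msqrt P))"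
proof -
  define Pi where "Pi = matrix_inv P"
  define K where "K = C ** G"
  define S where "S = 2 *\<^sub>R (C ** G ** matrix_inv P)"
  define D where "D = dev3 S"
  define \<phi> where "\<phi> = sqrt (trace (D ** D))"
  define c where "c = (1/3) * trace S"
  have Sdef: "S = 2 *\<^sub>R (K ** Pi)" by (simp add: S_def K_def Pi_def)
  have Ddef: "D = S - c *\<^sub>R mat 1" by (simp add: D_def dev3_def c_def)
  have P'def: "P' = (lam / \<phi>) *\<^sub>R (D ** P)" using P' by (simp add: \<phi>_def D_def S_def)
  have \<phi>p: "\<phi> > 0" using \<phi>pos by (simp add: \<phi>_def D_def S_def)
  have iP: "invertible P" using PSym_invertible[OF P] .
  have Psym: "transpose P = P" using P by (simp add: PSym_def)
  have PiP: "Pi ** P = mat 1" using inv_left[OF iP] by (simp add: Pi_def)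
  have PPi: "P ** Pi = mat 1" using inv_right[OF iP] by (simp add: Pi_def)
  have Pisym: "transpose Pi = Pi" using transpose_inv[OF iP] Psym by (simp add: Pi_def)
  have Ks: "transpose K = K" using Ksym by (simp add: K_def)
  have trD: "trace D = 0" by (simp add: D_def trace_dev3)
  have DP: "D ** P = 2 *\<^sub>R K - c *\<^sub>R P"
    by (simp add: Ddef Sdef mm_diff_r mm_scaleR_l cancel_r[OF PiP])
  show "transpose P' = P'"
    by (simp add: P'def tr_scaleR DP tr_diff Ks Psym)
  have CofP: "Cof P = det P *\<^sub>R Pi" using Cof_inv[OF iP] Pisym by (simp add: Pi_def)
  show "Cof P \<bullet> P' = 0"
  proof -
    have "Cof P \<bullet> (D ** P) = det P * trace (Pi ** (P ** transpose D))"
      by (simp add: CofP inner_trace matrix_transpose_mul Psym mm_scaleR_l trace_scaleR)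
    also have "\<dots> = 0" by (simp add: matrix_mul_assoc PiP trace_transpose trD)
    finally show ?thesis by (simp add: P'def inner_scaleR_right)
  qed
  show "G \<bullet> (C ** (- (matrix_inv P ** P' ** matrix_inv P))) = - lam / 2 * sqrt (trace (dev3 (2 *\<^sub>R (C ** G ** matrix_inv P)) ** dev3 (2 *\<^sub>R (C ** G ** matrix_inv P))))"
  proof -
    have "Pi ** P' ** Pi = (lam / \<phi>) *\<^sub>R (Pi ** D)"
      by (simp add: P'def mm_scaleR_l mm_scaleR_r cancel_r[OF PPi] matrix_mul_assoc)
    hence V: "C ** (- (Pi ** P' ** Pi)) = - (lam / \<phi>) *\<^sub>R (C ** Pi ** D)"
      by (simp add: mm_neg_r mm_scaleR_r matrix_mul_assoc)
    have "G \<bullet> (C ** Pi ** D) = trace (G ** (transpose D ** Pi ** C))"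
      by (simp add: inner_trace matrix_transpose_mul Pisym Csym matrix_mul_assoc)
    also have "\<dots> = trace (C ** (G ** (transpose D ** Pi)))"
      by (metis matrix_mul_assoc trace_mul_sym)
    also have "\<dots> = trace (Pi ** K ** transpose D)"
      by (metis K_def matrix_mul_assoc trace_mul_sym)
    also have "Pi ** K = (1/2) *\<^sub>R transpose S"
      by (simp add: Sdef tr_scaleR matrix_transpose_mul Ks Pisym)
    also have "trace ((1/2) *\<^sub>R transpose S ** transpose D) = (1/2) * trace (D ** S)"
      by (simp add: mm_scaleR_l trace_scaleR matrix_transpose_mul[symmetric] trace_transpose)
    also have "D ** S = D ** D + c *\<^sub>R D"
      by (simp add: Ddef mm_diff_l mm_scaleR_r algebra_simps)
    also have "trace (D ** D + c *\<^sub>R D) = \<phi>^2"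
    proof -
      have "trace (D ** D) > 0" using \<phi>p by (simp add: \<phi>_def)
      thus ?thesis by (simp add: trace_add trace_scaleR trD \<phi>_def)
    qed
    finally have e: "G \<bullet> (C ** Pi ** D) = 1/2 * \<phi>^2" .
    have "G \<bullet> (C ** (- (Pi ** P' ** Pi))) = - (lam / \<phi>) * (1/2 * \<phi>^2)"
      by (simp only: V inner_scaleR_right e)
    also have "\<dots> = - lam / 2 * \<phi>" using \<phi>p by (simp add: power2_eq_square field_simps)
    finally have "G \<bullet> (C ** (- (Pi ** P' ** Pi))) = - lam / 2 * \<phi>" .
    thus ?thesis by (simp add: Pi_def \<phi>_def D_def S_def)
  qed
  show "sqrt (trace (dev3 (2 *\<^sub>R (C ** G ** matrix_inv P)) ** dev3 (2 *\<^sub>R (C ** G ** matrix_inv P))))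
          = norm (dev3 (matrix_inv (msqrt P) ** (2 *\<^sub>R (C ** G ** matrix_inv P)) ** msqrt P))"
  proof -
    define U where "U = msqrt P"
    have U: "U \<in> PSym" "U ** U = P" using msqrt[OF P] by (auto simp: U_def)
    define Ui where "Ui = matrix_inv U"
    have iU: "invertible U" using PSym_invertible[OF U(1)] .
    have UUi: "U ** Ui = mat 1" and UiU: "Ui ** U = mat 1"
      using inv_right[OF iU] inv_left[OF iU] by (auto simp: Ui_def)
    have Usym: "transpose U = U" using U(1) by (simp add: PSym_def)
    have Uisym: "transpose Ui = Ui" using transpose_inv[OF iU] Usym by (simp add: Ui_def)
    have PiU: "Pi = Ui ** Ui" using inv_mult[OF iU iU] U(2) by (simp add: Pi_def Ui_def)
    define M where "M = Ui ** S ** U"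
    have trM: "trace M = trace S"
    proof -
      have "trace M = trace (S ** U ** Ui)" unfolding M_def by (metis matrix_mul_assoc trace_mul_sym)
      thus ?thesis by (simp add: cancel_r[OF UUi])
    qed
    have A1: "Ui ** D ** U = M - c *\<^sub>R mat 1"
      by (simp add: Ddef mm_diff_l mm_diff_r mm_scaleR_l mm_scaleR_r UiU M_def)
    have A: "dev3 M = Ui ** D ** U"
      unfolding A1 dev3_def trM c_def ..
    have M2: "M = 2 *\<^sub>R (Ui ** K ** Ui)"
      by (simp add: M_def Sdef PiU mm_scaleR_l mm_scaleR_r matrix_mul_assoc cancel_r[OF UiU])
    have Asym: "transpose (dev3 M) = dev3 M"
      by (simp add: dev3_def M2 tr_diff tr_scaleR matrix_transpose_mul Uisym Ks matrix_mul_assoc)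
    have "dev3 M \<bullet> dev3 M = trace (dev3 M ** dev3 M)" by (simp add: inner_trace Asym)
    also have "\<dots> = trace (Ui ** (D ** D ** U))"
      by (simp add: A matrix_mul_assoc cancel_r[OF UUi])
    also have "\<dots> = trace (D ** D)"
      by (metis cancel_r[OF UUi] matrix_mul_assoc trace_mul_sym)
    finally have "norm (dev3 M) = \<phi>" by (simp add: norm_eq_sqrt_inner \<phi>_def)
    thus ?thesis by (simp add: M_def U_def Ui_def \<phi>_def D_def S_def)
  qed
qed




lemma setting:
  assumes F: "det F > 0" and P: "P \<in> PSym"
  shows "trace (transpose F ** F ** matrix_inv P) > 0"
    and "trace (Cof (transpose F ** F ** matrix_inv P)) > 0"
    and "det (transpose F ** F ** matrix_inv P) > 0"
    and "transpose (transpose F ** F ** Gr d (transpose F ** F ** matrix_inv P))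
         = transpose F ** F ** Gr d (transpose F ** F ** matrix_inv P)"
proof -
  define C where "C = transpose F ** F"
  define Pi where "Pi = matrix_inv P"
  define X where "X = C ** Pi"
  have iF: "invertible F" using F by (simp add: invertible_det_nz)
  have iFt: "invertible (transpose F)" using invertible_transpose[OF iF] .
  have iC: "invertible C" unfolding C_def using invertible_mult[OF iFt iF] .
  have Csym: "transpose C = C" by (simp add: C_def matrix_transpose_mul)
  have iP: "invertible P" using PSym_invertible[OF P] .
  have Psym: "transpose P = P" using P by (simp add: PSym_def)
  have PiS: "Pi \<in> PSym" using PSym_inv[OF P] by (simp add: Pi_def)
  have Pisym: "transpose Pi = Pi" using PiS by (simp add: PSym_def)
  have iPi: "invertible Pi" using PSym_invertible[OF PiS] .
  have iX: "invertible X" unfolding X_def using invertible_mult[OF iC iPi] .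
  show "trace (transpose F ** F ** matrix_inv P) > 0"
  proof -
    have "trace (transpose F ** F ** Pi) = trace (F ** Pi ** transpose F)"
      by (metis matrix_mul_assoc trace_mul_sym)
    also have "\<dots> = trace (transpose (transpose F) ** Pi ** transpose F)" by simp
    also have "\<dots> > 0" by (rule trace_quad_pos[OF PiS iFt])
    finally show ?thesis by (simp add: Pi_def)
  qed
  have dP: "det P > 0" using det_PSym_pos[OF P] .
  have dX: "det X > 0"
  proof -
    have "det X = det F * det F * (1 / det P)"
      by (simp add: X_def C_def det_mul Pi_def det_inv[OF iP])
    thus ?thesis using F dP by simp
  qed
  thus "det (transpose F ** F ** matrix_inv P) > 0" by (simp add: X_def C_def Pi_def)
  define Fi where "Fi = matrix_inv F"
  have iFi: "invertible Fi" using invertible_inv[OF iF] by (simp add: Fi_def)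
  have invC: "matrix_inv C = Fi ** transpose Fi"
    using inv_mult[OF iFt iF] transpose_inv[OF iF] by (simp add: C_def Fi_def)
  have invX: "matrix_inv X = P ** matrix_inv C"
    using inv_mult[OF iC iPi] inv_inv[OF iP] by (simp add: X_def Pi_def)
  have CofX: "Cof X = det X *\<^sub>R transpose (matrix_inv X)" using Cof_inv[OF iX] .
  show "trace (Cof (transpose F ** F ** matrix_inv P)) > 0"
  proof -
    have "trace (Cof X) = det X * trace (P ** Fi ** transpose Fi)"
      by (simp add: CofX trace_scaleR trace_transpose invX invC matrix_mul_assoc)
    also have "trace (P ** Fi ** transpose Fi) = trace (transpose Fi ** P ** Fi)"
      by (metis matrix_mul_assoc trace_mul_sym)
    finally have "trace (Cof X) = det X * trace (transpose Fi ** P ** Fi)" .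
    moreover have "trace (transpose Fi ** P ** Fi) > 0" by (rule trace_quad_pos[OF P iFi])
    ultimately have "trace (Cof X) > 0" using dX by simp
    thus ?thesis by (simp add: X_def C_def Pi_def)
  qed
  have iCsym: "transpose (matrix_inv C) = matrix_inv C" using transpose_inv[OF iC] Csym by simp
  have CCof: "C ** Cof X = det X *\<^sub>R P"
  proof -
    have "C ** Cof X = det X *\<^sub>R (C ** (matrix_inv C ** P))"
      by (simp add: CofX invX matrix_transpose_mul iCsym Psym mm_scaleR_r)
    thus ?thesis by (simp add: matrix_mul_assoc inv_right[OF iC])
  qed
  have CtX: "C ** transpose X = C ** Pi ** C"
    by (simp add: X_def matrix_transpose_mul Csym Pisym matrix_mul_assoc)
  have "C ** Gr d X = (d (gv X))$1 *\<^sub>R C + (d (gv X))$2 *\<^sub>R (trace X *\<^sub>R C - C ** Pi ** C)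
      + ((d (gv X))$3 * det X) *\<^sub>R P"
    by (simp add: Gr_def G2_def mm_add_l mm_scaleR_r mm_diff_l CtX CCof)
  hence "transpose (C ** Gr d X) = C ** Gr d X"
    by (simp add: tr_add tr_scaleR tr_diff Csym Psym matrix_transpose_mul Pisym matrix_mul_assoc)
  thus "transpose (transpose F ** F ** Gr d (transpose F ** F ** matrix_inv P))
         = transpose F ** F ** Gr d (transpose F ** F ** matrix_inv P)"
    by (simp add: X_def C_def Pi_def)
qed




theorem mainTheorem13:
  fixes \<Psi> :: "real^3 \<Rightarrow> real" and d\<Psi> :: "real^3 \<Rightarrow> real^3"
    and F :: mat3 and Cp Cp' :: "real \<Rightarrow> mat3" and lam :: "real \<Rightarrow> real"
    and T :: "real set"
  assumes psi_deriv: "\<forall>x. (\<forall>i. x $ i > 0) \<longrightarrow> (\<Psi> has_derivative (\<lambda>h. d\<Psi> x \<bullet> h)) (at x)"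
    and psi_C1: "continuous_on {x. \<forall>i. x $ i > 0} d\<Psi>"
    and F_GL: "det F > 0"
    and T_int: "is_interval T"
    and Cp_PSym: "\<forall>t\<in>T. Cp t \<in> PSym"
    and Cp_ode: "\<forall>t\<in>T. (Cp has_vector_derivative Cp' t) (at t within T)"
    and flow: "\<forall>t\<in>T. Cp' t = (lam t / phi \<Psi> (transpose F ** F) (Cp t))
                  *\<^sub>R (dev3 (Sigt \<Psi> (transpose F ** F) (Cp t)) ** Cp t)"
    and lam_nonneg: "\<forall>t\<in>T. lam t \<ge> 0"
    and phi_pos: "\<forall>t\<in>T. phi \<Psi> (transpose F ** F) (Cp t) > 0"
  shows "(\<forall>t\<in>T. transpose (Cp' t) = Cp' t)
       \<and> (\<forall>s\<in>T. \<forall>t\<in>T. det (Cp s) = det (Cp t))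
       \<and> (\<forall>t\<in>T.
            ((\<lambda>s. Wt \<Psi> (transpose F ** F ** matrix_inv (Cp s)))
               has_real_derivative (- lam t / 2 * phi \<Psi> (transpose F ** F) (Cp t))) (at t within T)
          \<and> - lam t / 2 * phi \<Psi> (transpose F ** F) (Cp t)
              = - lam t / 2 * norm (dev3 (matrix_inv (msqrt (Cp t))
                    ** Sigt \<Psi> (transpose F ** F) (Cp t) ** msqrt (Cp t)))
          \<and> - lam t / 2 * phi \<Psi> (transpose F ** F) (Cp t) \<le> 0)"
proof -
  define C where "C = transpose F ** F"
  have Csym: "transpose C = C" by (simp add: C_def matrix_transpose_mul)
  define G where "G = (\<lambda>t. Dgrad (Wt \<Psi>) (C ** matrix_inv (Cp t)))"
  have Gd: "(Wt \<Psi> has_derivative (\<lambda>H. G t \<bullet> H)) (at (C ** matrix_inv (Cp t)))"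
    and Ks: "transpose (C ** G t) = C ** G t" if t: "t \<in> T" for t
  proof -
    have P: "Cp t \<in> PSym" using Cp_PSym t by blast
    note st = setting(1-3)[OF F_GL P] setting(4)[OF F_GL P, of d\<Psi>]
    have W: "(Wt \<Psi> has_derivative (\<lambda>H. Gr d\<Psi> (C ** matrix_inv (Cp t)) \<bullet> H)) (at (C ** matrix_inv (Cp t)))"
      using Wt_has_derivative[OF psi_deriv] st(1-3) by (simp add: C_def)
    have GG: "G t = Gr d\<Psi> (C ** matrix_inv (Cp t))" unfolding G_def by (rule Dgrad_eq[OF W])
    show "(Wt \<Psi> has_derivative (\<lambda>H. G t \<bullet> H)) (at (C ** matrix_inv (Cp t)))" using W GG by simp
    show "transpose (C ** G t) = C ** G t" using st(4) GG by (simp add: C_def)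
  qed
  have core: "transpose (Cp' t) = Cp' t \<and> Cof (Cp t) \<bullet> Cp' t = 0
     \<and> G t \<bullet> (C ** (- (matrix_inv (Cp t) ** Cp' t ** matrix_inv (Cp t)))) = - lam t / 2 * phi \<Psi> C (Cp t)
     \<and> phi \<Psi> C (Cp t) = norm (dev3 (matrix_inv (msqrt (Cp t)) ** Sigt \<Psi> C (Cp t) ** msqrt (Cp t)))"
    if t: "t \<in> T" for t
  proof -
    have P: "Cp t \<in> PSym" using Cp_PSym t by blast
    have pp: "sqrt (trace (dev3 (2 *\<^sub>R (C ** G t ** matrix_inv (Cp t))) ** dev3 (2 *\<^sub>R (C ** G t ** matrix_inv (Cp t))))) > 0"
      using phi_pos t by (simp add: phi_def Sigt_def G_def C_def)
    have fl: "Cp' t = (lam t / sqrt (trace (dev3 (2 *\<^sub>R (C ** G t ** matrix_inv (Cp t))) ** dev3 (2 *\<^sub>R (C ** G t ** matrix_inv (Cp t))))))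
               *\<^sub>R (dev3 (2 *\<^sub>R (C ** G t ** matrix_inv (Cp t))) ** Cp t)"
      using flow t by (simp add: phi_def Sigt_def G_def C_def)
    note ca = core_alg[OF P Csym Ks[OF t] pp fl]
    show ?thesis using ca by (simp add: phi_def Sigt_def G_def)
  qed
  have part1: "\<forall>t\<in>T. transpose (Cp' t) = Cp' t" using core by blast
  have part2: "\<forall>s\<in>T. \<forall>t\<in>T. det (Cp s) = det (Cp t)"
  proof -
    have "((\<lambda>s. det (Cp s)) has_derivative (\<lambda>h. 0)) (at t within T)" if t: "t \<in> T" for t
    proof -
      have "((\<lambda>s. det (Cp s)) has_field_derivative (Cof (Cp t) \<bullet> Cp' t)) (at t within T)"
        using det_vd Cp_ode t by blast
      hence "((\<lambda>s. det (Cp s)) has_field_derivative 0) (at t within T)" using core[OF t] by simp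
      moreover have "(*) (0::real) = (\<lambda>h. 0)" by (rule ext) simp
      ultimately show ?thesis by (simp add: has_field_derivative_def)
    qed
    then obtain c where "\<forall>x\<in>T. det (Cp x) = c"
      using has_derivative_zero_constant[OF is_interval_convex[OF T_int]] by blast
    thus ?thesis by simp
  qed
  have part3: "((\<lambda>s. Wt \<Psi> (C ** matrix_inv (Cp s)))
               has_real_derivative (- lam t / 2 * phi \<Psi> C (Cp t))) (at t within T)" if t: "t \<in> T" for t
  proof -
    define V where "V = C ** (- (matrix_inv (Cp t) ** Cp' t ** matrix_inv (Cp t)))"
    have inv: "\<forall>s\<in>T. invertible (Cp s)" using Cp_PSym PSym_invertible by blast
    have fd: "((\<lambda>s. matrix_inv (Cp s)) has_vector_derivative
      (- (matrix_inv (Cp t) ** Cp' t ** matrix_inv (Cp t)))) (at t within T)"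
      using inv_vd[OF inv t] Cp_ode t by blast
    have hd: "((\<lambda>s. C ** matrix_inv (Cp s)) has_vector_derivative V) (at t within T)"
      using mm_vd[OF has_vector_derivative_const fd] by (simp add: V_def)
    have "((Wt \<Psi> \<circ> (\<lambda>s. C ** matrix_inv (Cp s))) has_derivative ((\<lambda>H. G t \<bullet> H) \<circ> (\<lambda>u. u *\<^sub>R V))) (at t within T)"
      apply (rule diff_chain_within)
      using hd apply (simp add: has_vector_derivative_def)
      using has_derivative_at_withinI[OF Gd[OF t]] by simp
    moreover have "((\<lambda>H. G t \<bullet> H) \<circ> (\<lambda>u. u *\<^sub>R V)) = (\<lambda>u. (G t \<bullet> V) * u)"
      by (rule ext) (simp add: mult.commute)
    ultimately have "((\<lambda>s. Wt \<Psi> (C ** matrix_inv (Cp s))) has_real_derivative (G t \<bullet> V)) (at t within T)"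
      by (simp add: has_field_derivative_def o_def)
    thus ?thesis using core[OF t] by (simp add: V_def)
  qed
  show ?thesis
  proof (intro conjI ballI)
    show "\<And>t. t \<in> T \<Longrightarrow> transpose (Cp' t) = Cp' t" using part1 by blast
    show "\<And>s t. s \<in> T \<Longrightarrow> t \<in> T \<Longrightarrow> det (Cp s) = det (Cp t)" using part2 by blast
    fix t assume t: "t \<in> T"
    show "((\<lambda>s. Wt \<Psi> (transpose F ** F ** matrix_inv (Cp s)))
               has_real_derivative (- lam t / 2 * phi \<Psi> (transpose F ** F) (Cp t))) (at t within T)"
      using part3[OF t] by (simp add: C_def)
    show "- lam t / 2 * phi \<Psi> (transpose F ** F) (Cp t)
              = - lam t / 2 * norm (dev3 (matrix_inv (msqrt (Cp t))
                    ** Sigt \<Psi> (transpose F ** F) (Cp t) ** msqrt (Cp t)))"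
      using core[OF t] by (simp add: C_def)
    show "- lam t / 2 * phi \<Psi> (transpose F ** F) (Cp t) \<le> 0"
    proof -
      have "lam t \<ge> 0" "phi \<Psi> (transpose F ** F) (Cp t) > 0" using lam_nonneg phi_pos t by auto
      thus ?thesis by (simp add: mult_nonneg_nonneg)
    qed
  qed
qed


end
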